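(* Let $T>0$, $\alpha\in(0,2)$, and let $E,F\subset(0,T)$ be as in the context. Consider the system \[ \begin{cases} y_t = A y + a(t)y+ b(t)z+ \chi_E(t)\chi_{G_1}(x) u, & (x,t) \in I\times(0,T),\\ z_t = \bar{A} z + c(t)y+ d(t)z+ \chi_F(t)\chi_{G_2}(x) u, & (x,t) \in I\times(0,T),\\ y(\cdot,0)=y_0,\quad z(\cdot,0)=z_0 & \text{in } I, \end{cases} \] with $y(0,t)=y(1,t)=z(1,t)=0$, and $z(0,t)=0$ if $0<\alpha<1$, $(x^\alpha z_x)(0,t)=0$ if $1\le\alpha<2$, and controls $u\in L^2(0,T;L^2(G_1\cup G_2))$. This system is not null controllable at time $T$ (i.e. there exists $(y_0,z_0)\in(L^2(I))^2$ for which no such control yields $y(T)=z(T)=0$) provided one of the following holds: (1) $\chi_E\equiv1$ on $(0,T)$ and $c=0$ a.e. in $(0,T)$; (2) $\chi_F\equiv1$ on $(0,T)$ and $b=0$ a.e. in $(0,T)$.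
   Context: $I=(0,1)$. $G_1,G_2\subset I$ are nonempty open sets with $G_1\cap G_2=\emptyset$; $\chi_S$ is the characteristic function of $S$. $a,b,c,d\in L^\infty(0,T;\mathbb{R})$ depend on $t$ only. The time sets are $E=\bigcup_{i\ge1}(t_{2i-1},t_{2i})$, $F=\bigcup_{i\ge1}(t_{2i},t_{2i+1})$ for points $t_j\in[0,T]$, with $(0,T)=E\cup F$ (apart from the endpoints) and $E\cap F=\emptyset$. $A$: $\mathcal D(A)=H^2(I)\cap H^1_0(I)$, $Av=v_{xx}$. $\bar A$: $\mathcal D(\bar A)=\{v\in H^1_\alpha(I): (x^\alpha v_x)_x\in L^2(I),\ BC_\alpha(v)=0\}$, $\bar A v=(x^\alpha v_x)_x$, where $H^1_\alpha(I)=\{v\in L^2(I): v$ absolutely continuous in $I$, $x^{\alpha/2}v_x\in L^2(I)$, $v(1)=0\}$, and $BC_\alpha(v)=v|_{x=0}$ if $\alpha\in(0,1)$, $BC_\alpha(v)=(x^\alpha v_x)|_{x=0}$ if $\alpha\in[1,2)$. *)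

theory Defs
  imports "HOL-Analysis.Analysis"
begin

text \<open>Elements of L^2(I), I = (0,1), are represented by Borel functions real => real;
  only their values on I (up to null sets) matter.\<close>

definition L2I :: "(real \<Rightarrow> real) \<Rightarrow> bool" where
  "L2I f \<longleftrightarrow> set_borel_measurable lborel {0<..<1} f
              \<and> set_integrable lborel {0<..<1} (\<lambda>x. (f x)^2)"

definition ipI :: "(real \<Rightarrow> real) \<Rightarrow> (real \<Rightarrow> real) \<Rightarrow> real" where
  "ipI f g = (LINT x:{0<..<1}|lborel. f x * g x)"

text \<open>Graph of the operator A: D(A) = H^2(I) \<inter> H^1_0(I), A v = v_xx.
  domA v w means v \<in> D(A) and A v = w.\<close>
definition domA :: "(real \<Rightarrow> real) \<Rightarrow> (real \<Rightarrow> real) \<Rightarrow> bool" where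
  "domA v w \<longleftrightarrow> L2I w
     \<and> (\<exists>c1. \<forall>x\<in>{0..1}. v x = (LINT s:{0<..<x}|lborel. c1 + (LINT r:{0<..<s}|lborel. w r)))
     \<and> v 1 = 0"

text \<open>v \<in> H^1_alpha(I) with derivative g: v \<in> L^2(I), v absolutely continuous in I,
  v(1) = 0 (i.e. v(x) = - \<integral>_x^1 g), and x^(alpha/2) v_x \<in> L^2(I).\<close>
definition H1a :: "real \<Rightarrow> (real \<Rightarrow> real) \<Rightarrow> (real \<Rightarrow> real) \<Rightarrow> bool" where
  "H1a \<alpha> v g \<longleftrightarrow> L2I v \<and> set_borel_measurable lborel {0<..<1} g
     \<and> (\<forall>x\<in>{0<..<1}. set_integrable lborel {x..1} g \<and> v x = - (LINT s:{x..1}|lborel. g s))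
     \<and> set_integrable lborel {0<..<1} (\<lambda>x. (x powr (\<alpha>/2) * g x)^2)"

text \<open>Graph of the degenerate operator Abar: Abar v = (x^alpha v_x)_x with
  (x^alpha v_x)_x \<in> L^2(I) and BC_alpha(v) = 0.\<close>
definition domAbar :: "real \<Rightarrow> (real \<Rightarrow> real) \<Rightarrow> (real \<Rightarrow> real) \<Rightarrow> bool" where
  "domAbar \<alpha> v w \<longleftrightarrow> L2I w
     \<and> (\<exists>g c. H1a \<alpha> v g
          \<and> (AE x in lborel. x \<in> {0<..<1} \<longrightarrow> x powr \<alpha> * g x = c + (LINT s:{0<..<x}|lborel. w s))
          \<and> (if \<alpha> < 1 then (v \<longlongrightarrow> 0) (at_right 0) else c = 0))"

definition Linfty :: "real \<Rightarrow> (real \<Rightarrow> real) \<Rightarrow> bool" where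
  "Linfty T a \<longleftrightarrow> a \<in> borel_measurable lborel
     \<and> (\<exists>M. AE s in lborel. s \<in> {0<..<T} \<longrightarrow> \<bar>a s\<bar> \<le> M)"

definition control_L2 :: "real \<Rightarrow> real set \<Rightarrow> (real \<Rightarrow> real \<Rightarrow> real) \<Rightarrow> bool" where
  "control_L2 T G u \<longleftrightarrow> (\<lambda>p. u (fst p) (snd p)) \<in> borel_measurable lborel
     \<and> set_integrable lborel ({0<..<T} \<times> G) (\<lambda>p::real\<times>real. (u (fst p) (snd p))^2)"

definition C_L2 :: "real \<Rightarrow> (real \<Rightarrow> real \<Rightarrow> real) \<Rightarrow> bool" where
  "C_L2 T y \<longleftrightarrow> (\<forall>t\<in>{0..T}. L2I (y t))
     \<and> (\<forall>t0\<in>{0..T}. ((\<lambda>t. ipI (\<lambda>x. y t x - y t0 x) (\<lambda>x. y t x - y t0 x)) \<longlongrightarrow> 0)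
                          (at t0 within {0..T}))"

text \<open>Weak (= mild, by Ball's theorem) solution of the coupled system, tested against
  the domains of the self-adjoint operators A and Abar.\<close>
definition is_solution ::
  "real \<Rightarrow> real \<Rightarrow> (real \<Rightarrow> real) \<Rightarrow> (real \<Rightarrow> real) \<Rightarrow> (real \<Rightarrow> real) \<Rightarrow> (real \<Rightarrow> real)
   \<Rightarrow> real set \<Rightarrow> real set \<Rightarrow> real set \<Rightarrow> real set \<Rightarrow> (real \<Rightarrow> real \<Rightarrow> real)
   \<Rightarrow> (real \<Rightarrow> real) \<Rightarrow> (real \<Rightarrow> real) \<Rightarrow> (real \<Rightarrow> real \<Rightarrow> real) \<Rightarrow> (real \<Rightarrow> real \<Rightarrow> real) \<Rightarrow> bool" where
  "is_solution \<alpha> T a b c d E F G1 G2 u y0 z0 y z \<longleftrightarrow>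
     C_L2 T y \<and> C_L2 T z
     \<and> (\<forall>v w. domA v w \<longrightarrow> (\<forall>t\<in>{0..T}.
          let f = (\<lambda>s. ipI (y s) w + a s * ipI (y s) v + b s * ipI (z s) v
                        + indicator E s * ipI (\<lambda>x. indicator G1 x * u s x) v)
          in set_integrable lborel {0..t} f
             \<and> ipI (y t) v = ipI y0 v + (LINT s:{0..t}|lborel. f s)))
     \<and> (\<forall>v w. domAbar \<alpha> v w \<longrightarrow> (\<forall>t\<in>{0..T}.
          let f = (\<lambda>s. ipI (z s) w + c s * ipI (y s) v + d s * ipI (z s) v
                        + indicator F s * ipI (\<lambda>x. indicator G2 x * u s x) v)
          in set_integrable lborel {0..t} f
             \<and> ipI (z t) v = ipI z0 v + (LINT s:{0..t}|lborel. f s)))"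

end

theory Submission
  imports Defs
begin


lemma split_int:
  fixes f :: "real \<Rightarrow> real"
  assumes "set_integrable lborel {0..\<tau>} f" "0 \<le> t" "t \<le> \<tau>"
  shows "(LINT s:{0..\<tau>}|lborel. f s) = (LINT s:{0..t}|lborel. f s) + (LINT s:{t<..\<tau>}|lborel. f s)"
    "set_integrable lborel {t<..\<tau>} f" "set_integrable lborel {0..t} f"
proof -
  show i1: "set_integrable lborel {t<..\<tau>} f"
    by (rule set_integrable_subset[OF assms(1)]) (use assms in auto)
  show i2: "set_integrable lborel {0..t} f"
    by (rule set_integrable_subset[OF assms(1)]) (use assms in auto)
  have "{0..\<tau>} = {0..t} \<union> {t<..\<tau>}" using assms by auto
  then show "(LINT s:{0..\<tau>}|lborel. f s) = (LINT s:{0..t}|lborel. f s) + (LINT s:{t<..\<tau>}|lborel. f s)"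
  proof -
    have d: "{0..t} \<inter> {t<..\<tau>} = {}" by auto
    show ?thesis using set_integral_Un[OF d i2 i1] \<open>{0..\<tau>} = _\<close> by simp
  qed
qed

lemma pow_half_zero:
  fixes x B :: real
  assumes "\<And>n::nat. \<bar>x\<bar> \<le> B / 2^n"
  shows "x = 0"
proof (rule ccontr)
  assume "x \<noteq> 0"
  then have xp: "\<bar>x\<bar> > 0" by simp
  have "(\<lambda>n. B / 2^n) \<longlonglongrightarrow> 0"
    by (intro LIMSEQ_divide_realpow_zero) auto
  then have "\<exists>N. \<forall>n\<ge>N. \<bar>B / 2^n - 0\<bar> < \<bar>x\<bar>" using xp
    by (metis LIMSEQ_D real_norm_def)
  then obtain N where "\<bar>B / 2^N\<bar> < \<bar>x\<bar>" by auto
  with assms[of N] show False by linarith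
qed

lemma gronwall_block:
  fixes h k fI :: "real \<Rightarrow> real" and T M B \<tau> t :: real
  assumes int: "set_integrable lborel {0..T} fI"
  and eq: "\<And>t. t \<in> {0..T} \<Longrightarrow> h t = h0 + (LINT s:{0..t}|lborel. fI s)"
  and ae: "AE s in lborel. s \<in> {0<..<T} \<longrightarrow> fI s = k s * h s"
  and bd: "AE s in lborel. s \<in> {0<..<T} \<longrightarrow> \<bar>k s\<bar> \<le> M"
  and hB: "\<And>t. t \<in> {0..T} \<Longrightarrow> \<bar>h t\<bar> \<le> B"
  and ht: "h \<tau> = 0" and tau: "\<tau> \<in> {0..T}"
  and t: "0 \<le> t" "t \<le> \<tau>" "\<tau> - t \<le> 1 / (2 * (\<bar>M\<bar> + 1))"
  shows "h t = 0"
proof -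
  define K where "K = \<bar>M\<bar> + 1"
  have K: "K > 0" "K \<ge> M" by (auto simp: K_def)
  have intT: "\<And>x. x \<in> {0..T} \<Longrightarrow> set_integrable lborel {0..x} fI"
    by (rule set_integrable_subset[OF int]) auto
  have main: "\<forall>x. 0 \<le> x \<and> x \<le> \<tau> \<and> \<tau> - x \<le> 1 / (2 * K) \<longrightarrow> \<bar>h x\<bar> \<le> B / 2^n" for n
  proof (induction n)
    case 0
    then show ?case using hB tau by auto
  next
    case (Suc n)
    show ?case
    proof (intro allI impI)
      fix x assume x: "0 \<le> x \<and> x \<le> \<tau> \<and> \<tau> - x \<le> 1 / (2 * K)"
      have sp: "(LINT s:{0..\<tau>}|lborel. fI s) = (LINT s:{0..x}|lborel. fI s) + (LINT s:{x<..\<tau>}|lborel. fI s)"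
        "set_integrable lborel {x<..\<tau>} fI"
        using split_int[OF intT[OF tau]] x by auto
      have "h \<tau> - h x = (LINT s:{x<..\<tau>}|lborel. fI s)"
        using eq[OF tau] eq[of x] x tau sp(1) by auto
      then have hx: "\<bar>h x\<bar> = \<bar>LINT s:{x<..\<tau>}|lborel. fI s\<bar>" using ht by simp
      have ci: "set_integrable lborel {x<..\<tau>} (\<lambda>s. K * (B / 2^n))"
        by (rule set_integrable_subset[OF borel_integrable_atLeastAtMost'[of x \<tau>]]) auto
      have "\<bar>LINT s:{x<..\<tau>}|lborel. fI s\<bar> \<le> (LINT s:{x<..\<tau>}|lborel. \<bar>fI s\<bar>)"
        using set_integral_norm_bound[OF sp(2)] by simp
      also have "\<dots> \<le> (LINT s:{x<..\<tau>}|lborel. K * (B / 2^n))"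
      proof (rule set_integral_mono_AE[OF set_integrable_abs[OF sp(2)] ci])
        show "AE s\<in>{x<..\<tau>} in lborel. \<bar>fI s\<bar> \<le> K * (B / 2 ^ n)"
          using ae bd AE_lborel_singleton[of T]
        proof eventually_elim
          case (elim s)
          show ?case
          proof
            assume s: "s \<in> {x<..\<tau>}"
            then have s0: "s \<in> {0<..<T}" using elim x tau by auto
            have "\<bar>h s\<bar> \<le> B / 2^n" using Suc.IH s x by auto
            moreover have "\<bar>k s\<bar> \<le> K" using elim(2) s0 K by auto
            moreover have "B / 2^n \<ge> 0" using hB[of \<tau>] tau by (smt (verit) atLeastAtMost_iff divide_nonneg_pos zero_less_power)
            ultimately have "\<bar>k s\<bar> * \<bar>h s\<bar> \<le> K * (B / 2 ^ n)"
              by (intro mult_mono) auto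
            then show "\<bar>fI s\<bar> \<le> K * (B / 2 ^ n)" using elim(1) s0
              by (simp add: abs_mult)
          qed
        qed
      qed
      also have "\<dots> = (\<tau> - x) * (K * (B / 2^n))"
        using x by (simp add: set_integral_const)
      also have "\<dots> \<le> B / 2 ^ Suc n"
      proof -
        have B0: "B \<ge> 0" using hB[of \<tau>] tau by auto
        have "(\<tau> - x) * K \<le> 1/2" using x K by (simp add: field_simps)
        then have "(\<tau> - x) * K * (B / 2^n) \<le> 1/2 * (B / 2^n)"
          using B0 by (intro mult_right_mono) auto
        then show ?thesis by (simp add: field_simps)
      qed
      finally show "\<bar>h x\<bar> \<le> B / 2 ^ Suc n" using hx by simp
    qed
  qed
  show ?thesis
    by (rule pow_half_zero[of _ B]) (use main t K_def in auto)
qed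

lemma gronwall_zero:
  fixes h k fI :: "real \<Rightarrow> real" and T M h0 :: real
  assumes T: "T > 0"
  and int: "set_integrable lborel {0..T} fI"
  and eq: "\<And>t. t \<in> {0..T} \<Longrightarrow> h t = h0 + (LINT s:{0..t}|lborel. fI s)"
  and ae: "AE s in lborel. s \<in> {0<..<T} \<longrightarrow> fI s = k s * h s"
  and bd: "AE s in lborel. s \<in> {0<..<T} \<longrightarrow> \<bar>k s\<bar> \<le> M"
  and hT: "h T = 0"
  shows "h0 = 0"
proof -
  define B where "B = \<bar>h0\<bar> + (LINT s:{0..T}|lborel. \<bar>fI s\<bar>)"
  define \<delta> where "\<delta> = 1 / (2 * (\<bar>M\<bar> + 1))"
  have dp: "\<delta> > 0" by (simp add: \<delta>_def add_pos_nonneg)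
  have hB: "\<bar>h t\<bar> \<le> B" if t: "t \<in> {0..T}" for t
  proof -
    have sp: "(LINT s:{0..T}|lborel. \<bar>fI s\<bar>) = (LINT s:{0..t}|lborel. \<bar>fI s\<bar>) + (LINT s:{t<..T}|lborel. \<bar>fI s\<bar>)"
      "set_integrable lborel {0..t} fI"
      using split_int(1)[OF set_integrable_abs[OF int], of t] split_int(3)[OF int, of t] t by auto
    have "0 \<le> (LINT s:{t<..T}|lborel. \<bar>fI s\<bar>)"
      unfolding set_lebesgue_integral_def by (rule integral_nonneg_AE) (auto simp: indicator_def)
    moreover have "\<bar>LINT s:{0..t}|lborel. fI s\<bar> \<le> (LINT s:{0..t}|lborel. \<bar>fI s\<bar>)"
      using set_integral_norm_bound[OF sp(2)] by simp
    ultimately show ?thesis using eq[OF t] sp(1) unfolding B_def by linarith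
  qed
  have step: "\<forall>t. max 0 (T - real n * \<delta>) \<le> t \<and> t \<le> T \<longrightarrow> h t = 0" for n
  proof (induction n)
    case 0
    then show ?case using hT by auto
  next
    case (Suc n)
    show ?case
    proof (intro allI impI)
      fix t assume t: "max 0 (T - real (Suc n) * \<delta>) \<le> t \<and> t \<le> T"
      show "h t = 0"
      proof (cases "t \<ge> T - real n * \<delta>")
        case True
        then show ?thesis using Suc.IH t by auto
      next
        case False
        define \<tau> where "\<tau> = T - real n * \<delta>"
        have tau: "\<tau> \<in> {0..T}" "t \<le> \<tau>" using False t dp by (auto simp: \<tau>_def)
        have ht: "h \<tau> = 0" using Suc.IH tau by (auto simp: \<tau>_def)
        have "\<tau> - t \<le> \<delta>" using t by (auto simp: \<tau>_def algebra_simps)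
        then show ?thesis
          using gronwall_block[OF int eq ae bd hB ht tau(1)] t tau \<delta>_def by auto
      qed
    qed
  qed
  obtain n :: nat where "real n > T / \<delta>" using reals_Archimedean2 by blast
  then have "T - real n * \<delta> \<le> 0" using dp by (simp add: field_simps)
  then have "h 0 = 0" using step[of n] T by auto
  moreover have "h 0 = h0"
  proof -
    have "(LINT s:{0..0}|lborel. fI s) = 0"
      unfolding set_lebesgue_integral_def
      by (rule integral_eq_zero_AE) (use AE_lborel_singleton[of 0] in \<open>auto elim!: eventually_mono\<close>)
    then show ?thesis using eq[of 0] T by simp
  qed
  ultimately show ?thesis by simp
qed



lemma ftc_open:
  fixes F f :: "real \<Rightarrow> real"
  assumes "a \<le> b" "continuous_on {a..b} F"
    "\<And>x. a < x \<Longrightarrow> x < b \<Longrightarrow> (F has_real_derivative f x) (at x)"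
    "set_integrable lborel {a<..<b} f"
  shows "(LINT x:{a<..<b}|lborel. f x) = F b - F a"
proof -
  have "(LINT x:{a<..<b}|lborel. f x) = integral {a<..<b} f"
    by (rule set_borel_integral_eq_integral(2)[OF assms(4)])
  also have "\<dots> = integral {a..b} f" by (simp add: integral_open_interval_real)
  also have "\<dots> = F b - F a"
    by (rule integral_unique[OF fundamental_theorem_of_calculus_interior])
       (use assms in \<open>auto simp: has_real_derivative_iff_has_vector_derivative\<close>)
  finally show ?thesis .
qed

lemma ftc_closed:
  fixes F f :: "real \<Rightarrow> real"
  assumes "a \<le> b" "continuous_on {a..b} F"
    "\<And>x. a < x \<Longrightarrow> x < b \<Longrightarrow> (F has_real_derivative f x) (at x)"
    "set_integrable lborel {a..b} f"
  shows "(LINT x:{a..b}|lborel. f x) = F b - F a"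
proof -
  have "(LINT x:{a..b}|lborel. f x) = integral {a..b} f"
    by (rule set_borel_integral_eq_integral(2)[OF assms(4)])
  also have "\<dots> = F b - F a"
    by (rule integral_unique[OF fundamental_theorem_of_calculus_interior])
       (use assms in \<open>auto simp: has_real_derivative_iff_has_vector_derivative\<close>)
  finally show ?thesis .
qed

lemma cont_int_open:
  fixes f :: "real \<Rightarrow> real"
  assumes "continuous_on {a..b} f"
  shows "set_integrable lborel {a<..<b} f"
  by (rule set_integrable_subset[OF borel_integrable_atLeastAtMost'[OF assms]]) auto

lemma cont_meas_open:
  fixes f :: "real \<Rightarrow> real"
  assumes "continuous_on {a<..<b} f"
  shows "set_borel_measurable lborel {a<..<b} f"
  unfolding set_borel_measurable_def
  using borel_measurable_continuous_on_indicator[OF _ assms] by simp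

lemma L2I_cont:
  assumes "continuous_on {0..1} f"
  shows "L2I f"
  unfolding L2I_def
proof
  show "set_borel_measurable lborel {0<..<1} f"
    by (rule cont_meas_open) (rule continuous_on_subset[OF assms], auto)
  show "set_integrable lborel {0<..<1} (\<lambda>x. (f x)\<^sup>2)"
    by (rule cont_int_open) (intro continuous_intros assms)
qed

lemma pos_int:
  fixes g :: "real \<Rightarrow> real"
  assumes cont: "continuous_on {0..1} g" and nn: "\<And>x. x \<in> {0..1} \<Longrightarrow> g x \<ge> 0"
    and x0: "x0 \<in> {0<..<1}" "g x0 > 0"
  shows "(LINT x:{0<..<1}|lborel. g x) > 0"
proof -
  define c where "c = g x0 / 2"
  have c: "c > 0" using x0 by (simp add: c_def)
  have "isCont g x0"
    using continuous_on_interior[OF cont, of x0] x0 by (simp add: interior_atLeastAtMost_real)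
  then obtain \<delta> where d: "\<delta> > 0" "\<And>x. \<bar>x - x0\<bar> < \<delta> \<Longrightarrow> \<bar>g x - g x0\<bar> < c"
    using c unfolding continuous_at_eps_delta dist_real_def by blast
  define e where "e = min \<delta> (min x0 (1 - x0)) / 2"
  have e: "e > 0" "e < \<delta>" "x0 - e > 0" "x0 + e < 1" using d x0 unfolding e_def by (auto simp: min_def field_simps)
  define I where "I = {x0 - e..x0 + e}"
  have I: "I \<subseteq> {0<..<1}" using e by (auto simp: I_def)
  have gI: "g x \<ge> c" if "x \<in> I" for x
  proof -
    have "\<bar>x - x0\<bar> < \<delta>" using that e by (auto simp: I_def)
    then have "\<bar>g x - g x0\<bar> < c" by (rule d(2))
    then show ?thesis unfolding c_def by linarith
  qed
  have int1: "set_integrable lborel {0<..<1} g" by (rule cont_int_open[OF cont])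
  have eqi: "(\<lambda>x. indicator {0<..<1} x *\<^sub>R (indicator I x * c)) = (\<lambda>x. indicator I x *\<^sub>R c)"
    using I by (auto simp: indicator_def fun_eq_iff)
  have int2: "set_integrable lborel {0<..<1} (\<lambda>x. indicator I x * c)"
    unfolding set_integrable_def eqi
    by (rule borel_integrable_compact) (auto simp: I_def)
  have "(LINT x:{0<..<1}|lborel. indicator I x * c) = (LINT x:I|lborel. c)"
    unfolding set_lebesgue_integral_def eqi by simp
  also have "\<dots> = 2 * e * c" using e by (simp add: set_integral_const I_def)
  finally have v: "(LINT x:{0<..<1}|lborel. indicator I x * c) = 2 * e * c" .
  have "(LINT x:{0<..<1}|lborel. indicator I x * c) \<le> (LINT x:{0<..<1}|lborel. g x)"
  proof (rule set_integral_mono_AE[OF int2 int1])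
    show "AE x\<in>{0<..<1} in lborel. indicator I x * c \<le> g x"
      by (rule AE_I2) (use gI nn c in \<open>auto simp: indicator_def\<close>)
  qed
  then show ?thesis using v e c by (smt (verit) mult_pos_pos)
qed



lemma eigA: "\<exists>v lam. domA v (\<lambda>x. lam * v x) \<and> L2I v \<and> ipI v v > 0"
proof (intro exI conjI)
  define v where "v = (\<lambda>x::real. sin (pi * x))"
  have cv: "continuous_on {0..1} v" unfolding v_def by (intro continuous_intros)
  show "L2I v" by (rule L2I_cont[OF cv])
  show "ipI v v > 0" unfolding ipI_def
    by (rule pos_int[of _ "1/2"]) (auto simp: v_def intro!: continuous_intros)
  show "domA v (\<lambda>x. (-(pi^2)) * v x)"
    unfolding domA_def
  proof (intro conjI exI ballI)
    show "L2I (\<lambda>x. - (pi\<^sup>2) * v x)" by (rule L2I_cont) (intro continuous_intros cv)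
    show "v 1 = 0" by (simp add: v_def)
    fix x :: real assume x: "x \<in> {0..1}"
    have inner: "(LINT r:{0<..<s}|lborel. - (pi\<^sup>2) * v r) = pi * cos (pi * s) - pi" if "s \<ge> 0" for s
    proof -
      have "(LINT r:{0<..<s}|lborel. - (pi\<^sup>2) * v r) = pi * cos (pi * s) - pi * cos (pi * 0)"
        by (rule ftc_open[OF that])
           (auto simp: v_def power2_eq_square intro!: continuous_intros derivative_eq_intros cont_int_open)
      then show ?thesis by simp
    qed
    have "(LINT s:{0<..<x}|lborel. pi + (LINT r:{0<..<s}|lborel. - (pi\<^sup>2) * v r))
        = (LINT s:{0<..<x}|lborel. pi * cos (pi * s))"
      using inner by (intro set_lebesgue_integral_cong) (auto simp del: mult_minus_left)
    also have "\<dots> = sin (pi * x) - sin (pi * 0)"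
      by (rule ftc_open) (use x in \<open>auto intro!: continuous_intros derivative_eq_intros cont_int_open\<close>)
    finally show "v x = (LINT s:{0<..<x}|lborel. pi + (LINT r:{0<..<s}|lborel. - (pi\<^sup>2) * v r))"
      by (simp add: v_def)
  qed
qed



definition bc :: "real \<Rightarrow> nat \<Rightarrow> real" where
  "bc nu k = (-1)^k / (fact k * pochhammer (nu + 1) k)"

definition bf :: "real \<Rightarrow> real \<Rightarrow> real" where
  "bf nu s = (\<Sum>k. bc nu k * s^k)"
definition bf1 :: "real \<Rightarrow> real \<Rightarrow> real" where
  "bf1 nu s = (\<Sum>k. diffs (bc nu) k * s^k)"
definition bf2 :: "real \<Rightarrow> real \<Rightarrow> real" where
  "bf2 nu s = (\<Sum>k. diffs (diffs (bc nu)) k * s^k)"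

lemma poch_ge1: "nu \<ge> 0 \<Longrightarrow> pochhammer (nu + 1) k \<ge> (1::real)"
proof (induction k)
  case 0 then show ?case by simp
next
  case (Suc k)
  have "pochhammer (nu + 1) (Suc k) = pochhammer (nu + 1) k * (nu + 1 + of_nat k)"
    by (rule pochhammer_Suc)
  moreover have "nu + 1 + of_nat k \<ge> 1" using Suc by simp
  moreover have "pochhammer (nu + 1) k \<ge> 1" using Suc by simp
  ultimately have "1 * 1 \<le> pochhammer (nu + 1) k * (nu + 1 + of_nat k)"
    by (intro mult_mono) auto
  then show ?case using \<open>pochhammer (nu + 1) (Suc k) = _\<close> by simp
qed

lemma bc_sum: assumes "nu \<ge> 0" shows "summable (\<lambda>k. bc nu k * s^k)"
proof (rule summable_comparison_test'[OF summable_exp[of "\<bar>s\<bar>"]])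
  fix k :: nat
  have p: "pochhammer (nu + 1) k \<ge> 1" using poch_ge1[OF assms] .
  have "norm (bc nu k * s^k) = \<bar>s\<bar>^k / (fact k * pochhammer (nu + 1) k)"
    using p by (simp add: bc_def abs_mult power_abs abs_divide)
  also have "\<dots> \<le> \<bar>s\<bar>^k / fact k"
  proof (rule divide_left_mono)
    have "fact k * 1 \<le> fact k * pochhammer (nu + 1) k"
      using p by (intro mult_left_mono) auto
    then show "fact k \<le> fact k * pochhammer (nu + 1) k" by simp
    show "0 \<le> \<bar>s\<bar>^k" by simp
    have "0 < fact k * pochhammer (nu + 1) k" using p by (intro mult_pos_pos) auto
    then show "0 < fact k * pochhammer (nu + 1) k * fact k" by (intro mult_pos_pos) (use p in auto)
  qed
  finally show "norm (bc nu k * s^k) \<le> inverse (fact k) * \<bar>s\<bar>^k" by (simp add: field_simps)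
qed

lemma bc_sum1: "nu \<ge> 0 \<Longrightarrow> summable (\<lambda>k. diffs (bc nu) k * s^k)"
  by (rule termdiff_converges_all) (rule bc_sum)

lemma bc_sum2: "nu \<ge> 0 \<Longrightarrow> summable (\<lambda>k. diffs (diffs (bc nu)) k * s^k)"
  by (rule termdiff_converges_all) (rule bc_sum1)

lemma bf_deriv: "nu \<ge> 0 \<Longrightarrow> (bf nu has_real_derivative bf1 nu s) (at s)"
  unfolding bf_def[abs_def] bf1_def
  by (rule termdiffs_strong_converges_everywhere) (rule bc_sum)

lemma bf1_deriv: "nu \<ge> 0 \<Longrightarrow> (bf1 nu has_real_derivative bf2 nu s) (at s)"
  unfolding bf1_def[abs_def] bf2_def
  by (rule termdiffs_strong_converges_everywhere) (rule bc_sum1)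

lemma bf_0: "bf nu 0 = 1"
  unfolding bf_def by (subst powser_zero) (simp add: bc_def)

lemma bc_rec: assumes "nu \<ge> 0"
  shows "(of_nat k + nu + 1) * (of_nat (Suc k) * bc nu (Suc k)) + bc nu k = 0"
proof -
  have p: "pochhammer (nu + 1) k \<ge> 1" using poch_ge1[OF assms] .
  have q: "nu + 1 + of_nat k > 0" using assms by simp
  have p0: "pochhammer (nu + 1) k \<noteq> 0" using p by auto
  have "bc nu (Suc k) * (of_nat (Suc k) * (nu + 1 + of_nat k)) = - bc nu k"
    unfolding bc_def using p0 q
    by (simp add: pochhammer_Suc)
  moreover have "(of_nat k + nu + 1) * (of_nat (Suc k) * bc nu (Suc k)) = bc nu (Suc k) * (of_nat (Suc k) * (nu + 1 + of_nat k))"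
    by (simp add: algebra_simps)
  ultimately show ?thesis by simp
qed

lemma bf_ode: assumes "nu \<ge> 0" shows "s * bf2 nu s + (nu + 1) * bf1 nu s + bf nu s = 0"
proof -
  define D1 where "D1 = diffs (bc nu)"
  define f where "f = (\<lambda>m. of_nat m * D1 m * s^m)"
  have "(\<lambda>n. diffs D1 n * s^n * s) sums (bf2 nu s * s)"
    using bc_sum2[OF assms, of s] unfolding bf2_def D1_def
    by (intro sums_mult2) (simp add: summable_sums)
  moreover have "(\<lambda>n. f (Suc n)) = (\<lambda>n. diffs D1 n * s^n * s)"
    by (auto simp: f_def diffs_def fun_eq_iff)
  ultimately have "(\<lambda>n. f (Suc n)) sums (bf2 nu s * s)" by simp
  then have "f sums (bf2 nu s * s + f 0)" by (simp only: sums_Suc_iff)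
  moreover have "f 0 = 0" by (simp add: f_def)
  ultimately have s1: "f sums (bf2 nu s * s)" by simp
  have s2: "(\<lambda>m. (nu + 1) * (D1 m * s^m)) sums ((nu + 1) * bf1 nu s)"
    using bc_sum1[OF assms, of s] unfolding bf1_def D1_def
    by (intro sums_mult) (simp add: summable_sums)
  have s3: "(\<lambda>m. bc nu m * s^m) sums (bf nu s)"
    using bc_sum[OF assms, of s] unfolding bf_def by (simp add: summable_sums)
  have "(\<lambda>m. f m + (nu + 1) * (D1 m * s^m) + bc nu m * s^m) sums
        (bf2 nu s * s + (nu + 1) * bf1 nu s + bf nu s)"
    by (intro sums_add s1 s2 s3)
  moreover have "(\<lambda>m. f m + (nu + 1) * (D1 m * s^m) + bc nu m * s^m) = (\<lambda>m. 0)"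
  proof
    fix m
    have "f m + (nu + 1) * (D1 m * s^m) + bc nu m * s^m
        = ((of_nat m + nu + 1) * (of_nat (Suc m) * bc nu (Suc m)) + bc nu m) * s^m"
      unfolding f_def D1_def diffs_def by (simp add: algebra_simps)
    also have "\<dots> = 0" using bc_rec[OF assms] by simp
    finally show "f m + (nu + 1) * (D1 m * s^m) + bc nu m * s^m = 0" .
  qed
  ultimately have "(\<lambda>m. 0::real) sums (bf2 nu s * s + (nu + 1) * bf1 nu s + bf nu s)" by simp
  then have "bf2 nu s * s + (nu + 1) * bf1 nu s + bf nu s = 0"
    using sums_unique sums_zero by (metis sums_unique2)
  then show ?thesis by (simp add: algebra_simps)
qed



lemma bf_cont: "nu \<ge> 0 \<Longrightarrow> continuous_on A (bf nu)"
  by (rule continuous_at_imp_continuous_on) (auto intro: DERIV_isCont bf_deriv)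

lemma bf1_cont: "nu \<ge> 0 \<Longrightarrow> continuous_on A (bf1 nu)"
  by (rule continuous_at_imp_continuous_on) (auto intro: DERIV_isCont bf1_deriv)

lemma bf_cont_comp[continuous_intros]: "nu \<ge> 0 \<Longrightarrow> continuous_on A g \<Longrightarrow> continuous_on A (\<lambda>x. bf nu (g x))"
  by (rule continuous_on_compose2[OF bf_cont[of nu UNIV]]) auto

lemma bf1_cont_comp[continuous_intros]: "nu \<ge> 0 \<Longrightarrow> continuous_on A g \<Longrightarrow> continuous_on A (\<lambda>x. bf1 nu (g x))"
  by (rule continuous_on_compose2[OF bf1_cont[of nu UNIV]]) auto

lemma bf_root:
  assumes nu: "nu \<ge> 0"
  shows "\<exists>\<kappa>>0. bf nu \<kappa> = 0"
proof (rule ccontr)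
  assume nz: "\<not> (\<exists>\<kappa>>0. bf nu \<kappa> = 0)"
  define S where "S = (nu + 2)^2"
  have S0: "S > 0" using nu by (simp add: S_def)
  have pos: "bf nu s > 0" if s: "s \<in> {0..S}" for s
  proof (rule ccontr)
    assume "\<not> bf nu s > 0"
    then have "bf nu s \<le> 0" by simp
    then obtain x where x: "0 \<le> x" "x \<le> s" "bf nu x = 0"
      using IVT2'[of "bf nu" s 0 0] s bf_0[of nu] bf_cont[OF nu] by auto
    have "x \<noteq> 0" using x bf_0[of nu] by auto
    then show False using nz x by auto
  qed
  define W where "W = (\<lambda>s. s powr (nu + 1) * (bf nu s * (-2 * (S - s)) - (S - s)^2 * bf1 nu s))"
  have W0: "W 0 = 0" by (simp add: W_def)
  have WS: "W S = 0" by (simp add: W_def)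
  have "W 0 < W S"
  proof (rule DERIV_pos_imp_increasing_open[OF S0])
    show "continuous_on {0..S} W"
      unfolding W_def using nu
      by (intro continuous_intros continuous_on_powr') auto
    fix s assume s: "0 < s" "s < S"
    define E where "E = (nu + 1) * s powr nu * (bf nu s * (-2 * (S - s)) - (S - s)^2 * bf1 nu s)
        + s powr (nu + 1) * (2 * bf nu s - (S - s)^2 * bf2 nu s)"
    have D: "(W has_real_derivative E) (at s)"
      unfolding W_def E_def using s nu
      by (auto intro!: derivative_eq_intros bf_deriv bf1_deriv simp: algebra_simps power2_eq_square)
    have sp: "s powr (nu + 1) = s powr nu * s" using s by (simp add: powr_add)
    have ode: "s * bf2 nu s = - (nu + 1) * bf1 nu s - bf nu s" using bf_ode[OF nu, of s] by (simp add: algebra_simps)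
    have "E = s powr nu * (bf nu s * (-2 * (nu + 1) * (S - s)) + 2 * s * bf nu s - (S - s)^2 * (s * bf2 nu s)
        - (nu + 1) * (S - s)^2 * bf1 nu s)"
      unfolding E_def sp by (simp add: algebra_simps)
    also have "\<dots> = s powr nu * bf nu s * (((S - s) - (nu + 2))^2 + (nu + 2)^2)"
      unfolding ode S_def by (simp add: algebra_simps power2_eq_square)
    finally have Ee: "E = s powr nu * bf nu s * (((S - s) - (nu + 2))^2 + (nu + 2)^2)" .
    have "E > 0" unfolding Ee using pos[of s] s nu
      by (intro mult_pos_pos) (auto intro: add_nonneg_pos)
    then show "\<exists>y. (W has_real_derivative y) (at s) \<and> 0 < y" using D by blast
  qed
  then show False using W0 WS by simp
qed



lemma cont_pos_near0:
  fixes V :: "real \<Rightarrow> real"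
  assumes "continuous_on {0..1} V" "V 0 > 0"
  shows "\<exists>x0\<in>{0<..<1}. V x0 > 0"
proof -
  have z: "(0::real) \<in> {0..1}" by simp
  obtain d where d0: "d > 0" and d1: "\<forall>x'\<in>{0..1}. dist x' 0 < d \<longrightarrow> dist (V x') (V 0) < V 0"
    using assms(1)[unfolded continuous_on_iff, rule_format, OF z assms(2)] by blast
  have d: "d > 0" "\<And>x'. x' \<in> {0..1} \<Longrightarrow> \<bar>x'\<bar> < d \<Longrightarrow> \<bar>V x' - V 0\<bar> < V 0"
    using d0 d1 unfolding dist_real_def by auto
  define x0 where "x0 = min (d/2) (1/2)"
  have x0: "x0 \<in> {0<..<1}" "\<bar>x0\<bar> < d" using d by (auto simp: x0_def min_def)
  then have "\<bar>V x0 - V 0\<bar> < V 0" using d(2)[of x0] by auto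
  then show ?thesis using x0 by (intro bexI[of _ x0]) auto
qed

lemma ipI_pos:
  assumes "continuous_on {0..1} v" "x0 \<in> {0<..<1}" "v x0 \<noteq> 0"
  shows "ipI v v > 0"
  unfolding ipI_def
proof (rule pos_int[of _ x0])
  show "v x0 * v x0 > 0" using assms(3) by (metis not_real_square_gt_zero)
qed (use assms in \<open>auto intro!: continuous_intros\<close>)

lemma powr_cont0[continuous_intros]:
  "r > 0 \<Longrightarrow> continuous_on {0..b} (\<lambda>x::real. x powr r)"
  by (intro continuous_on_powr') (auto intro: continuous_intros)

lemma eigAbar_ge1:
  assumes a1: "1 \<le> \<alpha>" and a2: "\<alpha> < 2"
  shows "\<exists>v lam. domAbar \<alpha> v (\<lambda>x. lam * v x) \<and> L2I v \<and> ipI v v > 0"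
proof -
  define \<gamma> where "\<gamma> = 2 - \<alpha>"
  define nu where "nu = (\<alpha> - 1) / \<gamma>"
  have g0: "\<gamma> > 0" "\<gamma> \<le> 1" using a1 a2 by (auto simp: \<gamma>_def)
  have nu: "nu \<ge> 0" using a1 g0 by (simp add: nu_def)
  have gnu: "\<gamma> * (nu + 1) = 1" using g0 by (simp add: nu_def \<gamma>_def field_simps)
  obtain \<kappa> where k: "\<kappa> > 0" "bf nu \<kappa> = 0" using bf_root[OF nu] by blast
  define v where "v = (\<lambda>x. bf nu (\<kappa> * x powr \<gamma>))"
  define lam where "lam = - \<kappa> * \<gamma>^2"
  define g where "g = (\<lambda>x. \<kappa> * \<gamma> * x powr (\<gamma> - 1) * bf1 nu (\<kappa> * x powr \<gamma>))"
  define Q where "Q = (\<lambda>x. \<kappa> * \<gamma> * x * bf1 nu (\<kappa> * x powr \<gamma>))"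
  define Rf where "Rf = (\<lambda>x. \<kappa> * \<gamma> * x powr (1 - \<alpha>/2) * bf1 nu (\<kappa> * x powr \<gamma>))"
  have cv: "continuous_on {0..1} v" unfolding v_def using g0 nu by (intro continuous_intros) auto
  have cQ: "continuous_on {0..b} Q" for b unfolding Q_def using g0 nu by (intro continuous_intros) auto
  have cR: "continuous_on {0..1} Rf" unfolding Rf_def using g0 nu a2 by (intro continuous_intros) auto
  have cg: "continuous_on A g" if "A \<subseteq> {0<..}" for A
    unfolding g_def using g0 nu that by (intro continuous_intros) auto
  have dv: "(v has_real_derivative g x) (at x)" if x: "x > 0" for x
  proof -
    have "(v has_real_derivative bf1 nu (\<kappa> * x powr \<gamma>) * (\<kappa> * (\<gamma> * x powr (\<gamma> - 1)))) (at x)"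
      unfolding v_def using x nu
      by (auto intro!: derivative_eq_intros DERIV_chain2[OF bf_deriv])
    then show ?thesis by (simp add: g_def algebra_simps)
  qed
  have dQ: "(Q has_real_derivative lam * v x) (at x)" if x: "x > 0" for x
  proof -
    define s where "s = \<kappa> * x powr \<gamma>"
    have "(Q has_real_derivative \<kappa> * \<gamma> * (1 * bf1 nu s + x * (bf2 nu s * (\<kappa> * (\<gamma> * x powr (\<gamma> - 1)))))) (at x)"
      unfolding Q_def s_def using x nu
      by (auto intro!: derivative_eq_intros DERIV_chain2[OF bf1_deriv] simp: algebra_simps)
    moreover have "\<kappa> * \<gamma> * (1 * bf1 nu s + x * (bf2 nu s * (\<kappa> * (\<gamma> * x powr (\<gamma> - 1)))))
        = \<kappa> * \<gamma> * (bf1 nu s + \<gamma> * (s * bf2 nu s))"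
    proof -
      have xx: "x * x powr (\<gamma> - 1) = x powr \<gamma>" using x by (simp add: powr_add[symmetric] powr_diff)
      have "x * (bf2 nu s * (\<kappa> * (\<gamma> * x powr (\<gamma> - 1)))) = \<gamma> * ((\<kappa> * (x * x powr (\<gamma> - 1))) * bf2 nu s)"
        by (simp only: ac_simps)
      also have "\<dots> = \<gamma> * (s * bf2 nu s)" by (simp only: xx s_def)
      finally show ?thesis by simp
    qed
    ultimately have DQ: "(Q has_real_derivative \<kappa> * \<gamma> * (bf1 nu s + \<gamma> * (s * bf2 nu s))) (at x)"
      by metis
    have ode: "s * bf2 nu s = - (nu + 1) * bf1 nu s - bf nu s" using bf_ode[OF nu, of s] by (simp add: algebra_simps)
    moreover have "\<kappa> * \<gamma> * (bf1 nu s + \<gamma> * (s * bf2 nu s)) = lam * v x"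
    proof -
      have "\<kappa> * \<gamma> * (bf1 nu s + \<gamma> * (s * bf2 nu s)) = \<kappa> * \<gamma> * ((1 - \<gamma> * (nu + 1)) * bf1 nu s - \<gamma> * bf nu s)"
        unfolding ode by (simp add: algebra_simps)
      also have "\<dots> = lam * v x" using gnu by (simp add: lam_def v_def s_def power2_eq_square)
      finally show ?thesis .
    qed
    with DQ show ?thesis by metis
  qed
  have Qg: "x powr \<alpha> * g x = Q x" if x: "x > 0" for x
  proof -
    have "x powr \<alpha> * x powr (\<gamma> - 1) = x" using x by (simp add: powr_add[symmetric] \<gamma>_def)
    have "x powr \<alpha> * g x = \<kappa> * \<gamma> * (x powr \<alpha> * x powr (\<gamma> - 1)) * bf1 nu (\<kappa> * x powr \<gamma>)"
      unfolding g_def by (simp only: ac_simps)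
    then show ?thesis using \<open>x powr \<alpha> * x powr (\<gamma> - 1) = x\<close> unfolding Q_def by simp
  qed
  have Rg: "x powr (\<alpha>/2) * g x = Rf x" if x: "x > 0" for x
  proof -
    have "x powr (\<alpha>/2) * x powr (\<gamma> - 1) = x powr (1 - \<alpha>/2)" using x by (simp add: powr_add[symmetric] \<gamma>_def)
    have "x powr (\<alpha>/2) * g x = \<kappa> * \<gamma> * (x powr (\<alpha>/2) * x powr (\<gamma> - 1)) * bf1 nu (\<kappa> * x powr \<gamma>)"
      unfolding g_def by (simp only: ac_simps)
    then show ?thesis using \<open>x powr (\<alpha>/2) * x powr (\<gamma> - 1) = _\<close> unfolding Rf_def by simp
  qed
  have v1: "v 1 = 0" using k by (simp add: v_def)
  have v0: "v 0 = 1" using g0 by (simp add: v_def bf_0)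
  show ?thesis
  proof (intro exI conjI)
    show "L2I v" by (rule L2I_cont[OF cv])
    obtain x0 where "x0 \<in> {0<..<1}" "v x0 > 0" using cont_pos_near0[OF cv] v0 by auto
    then show "ipI v v > 0" by (intro ipI_pos[OF cv]) auto
    show "domAbar \<alpha> v (\<lambda>x. lam * v x)"
      unfolding domAbar_def
    proof (intro conjI exI)
      show "L2I (\<lambda>x. lam * v x)" by (rule L2I_cont) (intro continuous_intros cv)
      show "if \<alpha> < 1 then (v \<longlongrightarrow> 0) (at_right 0) else (0::real) = 0" using a1 by simp
      show "AE x in lborel. x \<in> {0<..<1} \<longrightarrow> x powr \<alpha> * g x = 0 + (LINT s:{0<..<x}|lborel. lam * v s)"
      proof (rule AE_I2, intro impI)
        fix x :: real assume x: "x \<in> {0<..<1}"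
        have "(LINT s:{0<..<x}|lborel. lam * v s) = Q x - Q 0"
          by (rule ftc_open) (use x cQ dQ in \<open>auto intro!: cont_int_open continuous_intros continuous_on_subset[OF cv]\<close>)
        then show "x powr \<alpha> * g x = 0 + (LINT s:{0<..<x}|lborel. lam * v s)"
          using Qg[of x] x by (simp add: Q_def)
      qed
      show "H1a \<alpha> v g"
        unfolding H1a_def
      proof (intro conjI ballI)
        show "L2I v" by (rule L2I_cont[OF cv])
        show "set_borel_measurable lborel {0<..<1} g" by (rule cont_meas_open) (rule cg, auto)
        fix x :: real assume x: "x \<in> {0<..<1}"
        show ii: "set_integrable lborel {x..1} g"
          by (rule borel_integrable_atLeastAtMost') (rule cg, use x in auto)
        have "(LINT s:{x..1}|lborel. g s) = v 1 - v x"
          by (rule ftc_closed) (use x dv ii in \<open>auto intro!: continuous_on_subset[OF cv]\<close>)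
        then show "v x = - (LINT s:{x..1}|lborel. g s)" using v1 by simp
      next
        have "set_integrable lborel {0<..<1} (\<lambda>x. (Rf x)^2)"
          by (rule cont_int_open) (intro continuous_intros cR)
        moreover have "set_integrable lborel {0<..<1} (\<lambda>x. (x powr (\<alpha> / 2) * g x)\<^sup>2) = set_integrable lborel {0<..<1} (\<lambda>x. (Rf x)^2)"
          by (rule set_integrable_cong) (auto simp: Rg)
        ultimately show "set_integrable lborel {0<..<1} (\<lambda>x. (x powr (\<alpha> / 2) * g x)\<^sup>2)" by simp
      qed
    qed
  qed
qed



lemma powr_int01:
  assumes "a > -1"
  shows "set_integrable lborel {0<..<1} (\<lambda>x::real. x powr a)"
proof -
  have "(\<lambda>x::real. x powr a) integrable_on {0..1}"
    by (rule integrable_on_powr_from_0) (use assms in auto)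
  then have "(\<lambda>x::real. x powr a) absolutely_integrable_on {0..1}"
    by (subst absolutely_integrable_on_iff_nonneg) auto
  then have "set_integrable lborel {0..1} (\<lambda>x::real. x powr a)"
    unfolding set_integrable_def by (subst (asm) integrable_completion) auto
  then show ?thesis by (rule set_integrable_subset) auto
qed

lemma eigAbar_lt1:
  assumes a1: "0 < \<alpha>" and a2: "\<alpha> < 1"
  shows "\<exists>v lam. domAbar \<alpha> v (\<lambda>x. lam * v x) \<and> L2I v \<and> ipI v v > 0"
proof -
  define \<gamma> where "\<gamma> = 2 - \<alpha>"
  define p where "p = 1 - \<alpha>"
  define nu where "nu = p / \<gamma>"
  have g0: "\<gamma> > 1" "p > 0" "\<gamma> - 1 = p" using a1 a2 by (auto simp: \<gamma>_def p_def)
  have nu: "nu \<ge> 0" using g0 by (simp add: nu_def)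
  have gnu: "\<gamma> * (nu + 1) = p + \<gamma>" using g0 by (simp add: nu_def field_simps)
  obtain \<kappa> where k: "\<kappa> > 0" "bf nu \<kappa> = 0" using bf_root[OF nu] by blast
  define v where "v = (\<lambda>x. x powr p * bf nu (\<kappa> * x powr \<gamma>))"
  define lam where "lam = - \<kappa> * \<gamma>^2"
  define g where "g = (\<lambda>x. p * x powr (p - 1) * bf nu (\<kappa> * x powr \<gamma>)
      + \<kappa> * \<gamma> * x powr (p + \<gamma> - 1) * bf1 nu (\<kappa> * x powr \<gamma>))"
  define Q where "Q = (\<lambda>x. p * bf nu (\<kappa> * x powr \<gamma>) + \<gamma> * \<kappa> * x powr \<gamma> * bf1 nu (\<kappa> * x powr \<gamma>))"
  have cv: "continuous_on {0..1} v" unfolding v_def using g0 nu by (intro continuous_intros) auto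
  have cQ: "continuous_on {0..b} Q" for b unfolding Q_def using g0 nu by (intro continuous_intros) auto
  have cg: "continuous_on A g" if "A \<subseteq> {0<..}" for A
    unfolding g_def using g0 nu that by (intro continuous_intros) auto
  have dv: "(v has_real_derivative g x) (at x)" if x: "x > 0" for x
  proof -
    have D: "(v has_real_derivative p * x powr (p - 1) * bf nu (\<kappa> * x powr \<gamma>)
        + x powr p * (bf1 nu (\<kappa> * x powr \<gamma>) * (\<kappa> * (\<gamma> * x powr (\<gamma> - 1))))) (at x)"
      unfolding v_def using x nu
      by (auto intro!: derivative_eq_intros DERIV_chain2[OF bf_deriv] simp: algebra_simps)
    have xx: "x powr p * x powr (\<gamma> - 1) = x powr (p + \<gamma> - 1)" using x by (simp add: powr_add[symmetric] add_diff_eq)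
    have "x powr p * (bf1 nu (\<kappa> * x powr \<gamma>) * (\<kappa> * (\<gamma> * x powr (\<gamma> - 1))))
        = \<kappa> * \<gamma> * (x powr p * x powr (\<gamma> - 1)) * bf1 nu (\<kappa> * x powr \<gamma>)"
      by (simp only: ac_simps)
    then have "x powr p * (bf1 nu (\<kappa> * x powr \<gamma>) * (\<kappa> * (\<gamma> * x powr (\<gamma> - 1))))
        = \<kappa> * \<gamma> * x powr (p + \<gamma> - 1) * bf1 nu (\<kappa> * x powr \<gamma>)" by (simp only: xx)
    with D show ?thesis unfolding g_def by metis
  qed
  have dQ: "(Q has_real_derivative lam * v x) (at x)" if x: "x > 0" for x
  proof -
    define s where "s = \<kappa> * x powr \<gamma>"
    define xg where "xg = x powr (\<gamma> - 1)"
    have D: "(Q has_real_derivative p * (bf1 nu s * (\<kappa> * (\<gamma> * xg)))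
        + \<gamma> * \<kappa> * ((\<gamma> * xg) * bf1 nu s + x powr \<gamma> * (bf2 nu s * (\<kappa> * (\<gamma> * xg))))) (at x)"
      unfolding Q_def s_def xg_def using x nu
      by (auto intro!: derivative_eq_intros DERIV_chain2[OF bf_deriv] DERIV_chain2[OF bf1_deriv] simp: algebra_simps)
    have ode: "s * bf2 nu s = - (nu + 1) * bf1 nu s - bf nu s" using bf_ode[OF nu, of s] by (simp add: algebra_simps)
    have "p * (bf1 nu s * (\<kappa> * (\<gamma> * xg)))
        + \<gamma> * \<kappa> * ((\<gamma> * xg) * bf1 nu s + x powr \<gamma> * (bf2 nu s * (\<kappa> * (\<gamma> * xg))))
        = \<kappa> * \<gamma> * xg * ((p + \<gamma>) * bf1 nu s + \<gamma> * (s * bf2 nu s))"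
      unfolding s_def by (simp add: algebra_simps)
    also have "\<dots> = \<kappa> * \<gamma> * xg * ((p + \<gamma> - \<gamma> * (nu + 1)) * bf1 nu s - \<gamma> * bf nu s)"
      unfolding ode by (simp add: algebra_simps)
    also have "\<dots> = lam * v x"
      using gnu g0 by (simp add: lam_def v_def s_def xg_def power2_eq_square)
    finally show ?thesis using D by metis
  qed
  have Qg: "x powr \<alpha> * g x = Q x" if x: "x > 0" for x
  proof -
    have e1: "x powr \<alpha> * x powr (p - 1) = 1" using x by (simp add: powr_add[symmetric] p_def)
    have e2: "x powr \<alpha> * x powr (p + \<gamma> - 1) = x powr \<gamma>" using x by (simp add: powr_add[symmetric] p_def \<gamma>_def)
    have "x powr \<alpha> * g x = p * (x powr \<alpha> * x powr (p - 1)) * bf nu (\<kappa> * x powr \<gamma>)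
      + \<kappa> * \<gamma> * (x powr \<alpha> * x powr (p + \<gamma> - 1)) * bf1 nu (\<kappa> * x powr \<gamma>)"
      unfolding g_def by (simp only: ac_simps distrib_left)
    then show ?thesis unfolding e1 e2 Q_def by (simp add: ac_simps)
  qed
  obtain B where B: "\<And>x. x \<in> {0..1} \<Longrightarrow> norm (Q x) \<le> B"
    using continuous_on_compact_bound[OF compact_Icc cQ[of 1]] by metis
  have v1: "v 1 = 0" using k by (simp add: v_def)
  have v00: "v 0 = 0" using g0 by (simp add: v_def)
  have Q0: "Q 0 = p" using g0 by (simp add: Q_def bf_0)
  show ?thesis
  proof (intro exI conjI)
    show "L2I v" by (rule L2I_cont[OF cv])
    define V where "V = (\<lambda>x. bf nu (\<kappa> * x powr \<gamma>))"
    have cV: "continuous_on {0..1} V" unfolding V_def using g0 nu by (intro continuous_intros) auto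
    obtain x0 where x0: "x0 \<in> {0<..<1}" "V x0 > 0" using cont_pos_near0[OF cV] g0 by (auto simp: V_def bf_0)
    then have "v x0 > 0" by (simp add: v_def V_def)
    then show "ipI v v > 0" using x0 by (intro ipI_pos[OF cv]) auto
    show "domAbar \<alpha> v (\<lambda>x. lam * v x)"
      unfolding domAbar_def
    proof (intro conjI exI)
      show "L2I (\<lambda>x. lam * v x)" by (rule L2I_cont) (intro continuous_intros cv)
      have "(v \<longlongrightarrow> v 0) (at 0 within {0..1})"
        using cv unfolding continuous_on_def by auto
      then have "(v \<longlongrightarrow> 0) (at_right 0)" using v00 by (simp add: at_within_Icc_at_right)
      then show "if \<alpha> < 1 then (v \<longlongrightarrow> 0) (at_right 0) else p = 0" using a2 by simp
      show "AE x in lborel. x \<in> {0<..<1} \<longrightarrow> x powr \<alpha> * g x = p + (LINT s:{0<..<x}|lborel. lam * v s)"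
      proof (rule AE_I2, intro impI)
        fix x :: real assume x: "x \<in> {0<..<1}"
        have "(LINT s:{0<..<x}|lborel. lam * v s) = Q x - Q 0"
          by (rule ftc_open) (use x cQ dQ in \<open>auto intro!: cont_int_open continuous_intros continuous_on_subset[OF cv]\<close>)
        then show "x powr \<alpha> * g x = p + (LINT s:{0<..<x}|lborel. lam * v s)"
          using Qg[of x] x Q0 by simp
      qed
      show "H1a \<alpha> v g"
        unfolding H1a_def
      proof (intro conjI ballI)
        show "L2I v" by (rule L2I_cont[OF cv])
        show "set_borel_measurable lborel {0<..<1} g" by (rule cont_meas_open) (rule cg, auto)
        fix x :: real assume x: "x \<in> {0<..<1}"
        show ii: "set_integrable lborel {x..1} g"
          by (rule borel_integrable_atLeastAtMost') (rule cg, use x in auto)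
        have "(LINT s:{x..1}|lborel. g s) = v 1 - v x"
          by (rule ftc_closed) (use x dv ii in \<open>auto intro!: continuous_on_subset[OF cv]\<close>)
        then show "v x = - (LINT s:{x..1}|lborel. g s)" using v1 by simp
      next
        show "set_integrable lborel {0<..<1} (\<lambda>x. (x powr (\<alpha> / 2) * g x)\<^sup>2)"
        proof (rule set_integrable_bound[where f="\<lambda>x. B^2 * x powr (-\<alpha>)"])
          show "set_integrable lborel {0<..<1} (\<lambda>x. B^2 * x powr (-\<alpha>))"
            using powr_int01[of "-\<alpha>"] a2 by auto
          show "set_borel_measurable lborel {0<..<1} (\<lambda>x. (x powr (\<alpha> / 2) * g x)\<^sup>2)"
            by (rule cont_meas_open) (intro continuous_intros cg, auto)
          show "AE x in lborel. x \<in> {0<..<1} \<longrightarrow> norm ((x powr (\<alpha> / 2) * g x)\<^sup>2) \<le> norm (B^2 * x powr (-\<alpha>))"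
          proof (rule AE_I2, intro impI)
            fix x :: real assume x: "x \<in> {0<..<1}"
            have e: "x powr (\<alpha> / 2) * g x = Q x * x powr (-\<alpha>/2)"
            proof -
              have "x powr (\<alpha> / 2) = x powr \<alpha> * x powr (-\<alpha>/2)" using x by (simp add: powr_add[symmetric])
              then show ?thesis using Qg[of x] x by (simp add: ac_simps)
            qed
            have "(x powr (\<alpha> / 2) * g x)\<^sup>2 = (Q x)^2 * x powr (-\<alpha>)"
              unfolding e using x by (simp add: power_mult_distrib powr_powr[symmetric] powr_realpow[symmetric] powr_powr)
            moreover have "(Q x)^2 \<le> B^2"
            proof -
              have "\<bar>Q x\<bar>^2 \<le> B^2" by (rule power_mono) (use B[of x] x in auto)
              then show ?thesis by simp
            qed
            ultimately show "norm ((x powr (\<alpha> / 2) * g x)\<^sup>2) \<le> norm (B^2 * x powr (-\<alpha>))"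
              using x by (simp add: mult_right_mono)
          qed
        qed
      qed
    qed
  qed
qed

lemma eigAbar: "0 < \<alpha> \<Longrightarrow> \<alpha> < 2 \<Longrightarrow> \<exists>v lam. domAbar \<alpha> v (\<lambda>x. lam * v x) \<and> L2I v \<and> ipI v v > 0"
  using eigAbar_lt1 eigAbar_ge1 by (cases "\<alpha> < 1") auto




lemma ipI_scale: "ipI g (\<lambda>x. lam * v x) = lam * ipI g v"
proof -
  have "ipI g (\<lambda>x. lam * v x) = (LINT x:{0<..<1}|lborel. lam * (g x * v x))"
    unfolding ipI_def by (simp add: ac_simps)
  also have "\<dots> = lam * ipI g v" unfolding ipI_def by (rule set_integral_mult_right)
  finally show ?thesis .
qed

lemma mode_contra:
  fixes \<zeta> :: "real \<Rightarrow> real \<Rightarrow> real" and v k fI :: "real \<Rightarrow> real"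
  assumes T: "T > 0" and k: "Linfty T k" and pos: "ipI v v > 0"
  and H: "\<forall>t\<in>{0..T}. set_integrable lborel {0..t} fI \<and> ipI (\<zeta> t) v = ipI v v + (LINT s:{0..t}|lborel. fI s)"
  and ae: "AE s in lborel. s \<in> {0<..<T} \<longrightarrow> fI s = (lam + k s) * ipI (\<zeta> s) v"
  and fin: "AE x in lborel. x \<in> {0<..<1} \<longrightarrow> \<zeta> T x = 0"
  shows False
proof -
  obtain M where M: "AE s in lborel. s \<in> {0<..<T} \<longrightarrow> \<bar>k s\<bar> \<le> M"
    using k unfolding Linfty_def by auto
  have bd: "AE s in lborel. s \<in> {0<..<T} \<longrightarrow> \<bar>lam + k s\<bar> \<le> \<bar>lam\<bar> + M"
    using M by eventually_elim auto
  have hT: "ipI (\<zeta> T) v = 0"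
    unfolding ipI_def set_lebesgue_integral_def
    by (rule integral_eq_zero_AE) (use fin in \<open>auto elim!: eventually_mono simp: indicator_def split: if_splits\<close>)
  have "ipI v v = 0"
    by (rule gronwall_zero[where h="\<lambda>t. ipI (\<zeta> t) v" and fI=fI and k="\<lambda>s. lam + k s", OF T _ _ ae bd hT])
       (use H T in auto)
  then show False using pos by simp
qed

lemma L2I_zero: "L2I (\<lambda>x. 0)"
  unfolding L2I_def set_borel_measurable_def set_integrable_def by simp

theorem theorem1p3:
  fixes T \<alpha> :: real and G1 G2 E F :: "real set" and tp :: "nat \<Rightarrow> real"
    and a b c d :: "real \<Rightarrow> real"
  assumes "T > 0" and "0 < \<alpha>" and "\<alpha> < 2"
    and "open G1" and "open G2" and "G1 \<noteq> {}" and "G2 \<noteq> {}"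
    and "G1 \<subseteq> {0<..<1}" and "G2 \<subseteq> {0<..<1}" and "G1 \<inter> G2 = {}"
    and "Linfty T a" and "Linfty T b" and "Linfty T c" and "Linfty T d"
    and "\<forall>j. tp j \<in> {0..T}"
    and "E = (\<Union>i\<in>{1..}. {tp (2*i-1)<..<tp (2*i)})"
    and "F = (\<Union>i\<in>{1..}. {tp (2*i)<..<tp (2*i+1)})"
    and "E \<inter> F = {}"
    and "\<forall>s\<in>{0<..<T}. s \<notin> range tp \<longrightarrow> s \<in> E \<union> F"
    and "((\<forall>s\<in>{0<..<T}. s \<in> E) \<and> (AE s in lborel. s \<in> {0<..<T} \<longrightarrow> c s = 0))
       \<or> ((\<forall>s\<in>{0<..<T}. s \<in> F) \<and> (AE s in lborel. s \<in> {0<..<T} \<longrightarrow> b s = 0))"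
  shows "\<exists>y0 z0. L2I y0 \<and> L2I z0 \<and>
           \<not> (\<exists>u y z. control_L2 T (G1 \<union> G2) u
                 \<and> is_solution \<alpha> T a b c d E F G1 G2 u y0 z0 y z
                 \<and> (AE x in lborel. x \<in> {0<..<1} \<longrightarrow> y T x = 0 \<and> z T x = 0))"
proof -
  note T = \<open>T > 0\<close>
  note EF = \<open>E \<inter> F = {}\<close>
  from assms(20) show ?thesis
  proof
    assume h: "(\<forall>s\<in>{0<..<T}. s \<in> E) \<and> (AE s in lborel. s \<in> {0<..<T} \<longrightarrow> c s = 0)"
    obtain v lam where v: "domAbar \<alpha> v (\<lambda>x. lam * v x)" "L2I v" "ipI v v > 0"
      using eigAbar[OF assms(2,3)] by blast
    show ?thesis
    proof (intro exI conjI)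
      show "L2I (\<lambda>x. 0)" by (rule L2I_zero)
      show "L2I v" by (rule v(2))
      show "\<not> (\<exists>u y z. control_L2 T (G1 \<union> G2) u
                 \<and> is_solution \<alpha> T a b c d E F G1 G2 u (\<lambda>x. 0) v y z
                 \<and> (AE x in lborel. x \<in> {0<..<1} \<longrightarrow> y T x = 0 \<and> z T x = 0))"
      proof
        assume "\<exists>u y z. control_L2 T (G1 \<union> G2) u
                 \<and> is_solution \<alpha> T a b c d E F G1 G2 u (\<lambda>x. 0) v y z
                 \<and> (AE x in lborel. x \<in> {0<..<1} \<longrightarrow> y T x = 0 \<and> z T x = 0)"
        then obtain u y z where sol: "is_solution \<alpha> T a b c d E F G1 G2 u (\<lambda>x. 0) v y z"
          and fin: "AE x in lborel. x \<in> {0<..<1} \<longrightarrow> y T x = 0 \<and> z T x = 0" by blast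
        define fI where "fI = (\<lambda>s. ipI (z s) (\<lambda>x. lam * v x) + c s * ipI (y s) v + d s * ipI (z s) v
                        + indicator F s * ipI (\<lambda>x. indicator G2 x * u s x) v)"
        have H: "\<forall>t\<in>{0..T}. set_integrable lborel {0..t} fI \<and> ipI (z t) v = ipI v v + (LINT s:{0..t}|lborel. fI s)"
          using sol v(1) unfolding is_solution_def fI_def Let_def by blast
        show False
        proof (rule mode_contra[OF T assms(14) v(3) H])
          show "AE s in lborel. s \<in> {0<..<T} \<longrightarrow> fI s = (lam + d s) * ipI (z s) v"
            using conjunct2[OF h]
          proof (rule eventually_mono)
            fix s assume elim: "s \<in> {0<..<T} \<longrightarrow> c s = 0"
            show "s \<in> {0<..<T} \<longrightarrow> fI s = (lam + d s) * ipI (z s) v"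
            proof
              assume s: "s \<in> {0<..<T}"
              then have "s \<notin> F" using h EF by auto
              then show "fI s = (lam + d s) * ipI (z s) v"
                using elim s unfolding fI_def by (simp add: ipI_scale algebra_simps)
            qed
          qed
          show "AE x in lborel. x \<in> {0<..<1} \<longrightarrow> z T x = 0" using fin by eventually_elim auto
        qed
      qed
    qed
  next
    assume h: "(\<forall>s\<in>{0<..<T}. s \<in> F) \<and> (AE s in lborel. s \<in> {0<..<T} \<longrightarrow> b s = 0)"
    obtain v lam where v: "domA v (\<lambda>x. lam * v x)" "L2I v" "ipI v v > 0"
      using eigA by blast
    show ?thesis
    proof (intro exI conjI)
      show "L2I v" by (rule v(2))
      show "L2I (\<lambda>x. 0)" by (rule L2I_zero)
      show "\<not> (\<exists>u y z. control_L2 T (G1 \<union> G2) u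
                 \<and> is_solution \<alpha> T a b c d E F G1 G2 u v (\<lambda>x. 0) y z
                 \<and> (AE x in lborel. x \<in> {0<..<1} \<longrightarrow> y T x = 0 \<and> z T x = 0))"
      proof
        assume "\<exists>u y z. control_L2 T (G1 \<union> G2) u
                 \<and> is_solution \<alpha> T a b c d E F G1 G2 u v (\<lambda>x. 0) y z
                 \<and> (AE x in lborel. x \<in> {0<..<1} \<longrightarrow> y T x = 0 \<and> z T x = 0)"
        then obtain u y z where sol: "is_solution \<alpha> T a b c d E F G1 G2 u v (\<lambda>x. 0) y z"
          and fin: "AE x in lborel. x \<in> {0<..<1} \<longrightarrow> y T x = 0 \<and> z T x = 0" by blast
        define fI where "fI = (\<lambda>s. ipI (y s) (\<lambda>x. lam * v x) + a s * ipI (y s) v + b s * ipI (z s) v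
                        + indicator E s * ipI (\<lambda>x. indicator G1 x * u s x) v)"
        have H: "\<forall>t\<in>{0..T}. set_integrable lborel {0..t} fI \<and> ipI (y t) v = ipI v v + (LINT s:{0..t}|lborel. fI s)"
          using sol v(1) unfolding is_solution_def fI_def Let_def by blast
        show False
        proof (rule mode_contra[OF T assms(11) v(3) H])
          show "AE s in lborel. s \<in> {0<..<T} \<longrightarrow> fI s = (lam + a s) * ipI (y s) v"
            using conjunct2[OF h]
          proof (rule eventually_mono)
            fix s assume elim: "s \<in> {0<..<T} \<longrightarrow> b s = 0"
            show "s \<in> {0<..<T} \<longrightarrow> fI s = (lam + a s) * ipI (y s) v"
            proof
              assume s: "s \<in> {0<..<T}"
              then have "s \<notin> E" using h EF by auto
              then show "fI s = (lam + a s) * ipI (y s) v"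
                using elim s unfolding fI_def by (simp add: ipI_scale algebra_simps)
            qed
          qed
          show "AE x in lborel. x \<in> {0<..<1} \<longrightarrow> y T x = 0" using fin by eventually_elim auto
        qed
      qed
    qed
  qed
qed


end
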